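(* Let $G$ be a finite abelian group and let $1\leq p,q\leq 2$. Let $\Sigma\subset\widehat{G}$ satisfy the $(p,q)$-restriction estimate with constant $\rho_{p,q}(\Sigma)$, i.e. $$\Bigl(\sum_{\chi\in\Sigma}|\widehat f(\chi)|^q\Bigr)^{1/q}\leq \rho_{p,q}(\Sigma)\Bigl(\sum_{x\in G}|f(x)|^p\Bigr)^{1/p}\quad\text{for all } f:G\to\mathbb{C}.$$ Let $S\subset G$ be such that $\rho_{p,q}(\Sigma)\,|S|^{1/p}<|G|^{\frac1q-\frac12}$. Then $(S,\Sigma)$ is a strong annihilating pair: for every $f:G\to\mathbb{C}$, $$\|f\|_{L^2(G)}\leq A_{ann}(S,\Sigma)\bigl(\|f\|_{L^2(G\setminus S)}+\|\widehat f\|_{L^2(\widehat G\setminus\Sigma)}\bigr),\qquad A_{ann}(S,\Sigma)=1+\frac{|S|^{1/2}\,|\widehat G\setminus\Sigma|^{\frac1q-\frac12}}{|G|^{\frac1q-\frac12}-\rho_{p,q}(\Sigma)|S|^{1/p}}.$$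
   Context: $G$ and $\widehat G$ (the group of characters $\chi:G\to\{|z|=1\}$) are equipped with counting measure, $|\cdot|$ denotes cardinality, and $|\widehat G|=|G|$. The Fourier transform is $\widehat f(\chi)=|G|^{-1/2}\sum_{x\in G}f(x)\overline{\chi(x)}$, which is unitary $L^2(G)\to L^2(\widehat G)$. All $L^r$ norms are with respect to counting measure. *)

theory Defs
  imports "HOL-Analysis.Analysis"
begin

definition characters :: "('g::{ab_group_add,finite} \<Rightarrow> complex) set" where
  "characters = {c. (\<forall>x y. c (x + y) = c x * c y) \<and> (\<forall>x. cmod (c x) = 1)}"

text \<open>Unitary Fourier transform, counting measure.\<close>
definition fourier :: "('g::{ab_group_add,finite} \<Rightarrow> complex) \<Rightarrow> ('g \<Rightarrow> complex) \<Rightarrow> complex" where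
  "fourier f c = (1 / sqrt (real CARD('g))) * (\<Sum>x\<in>UNIV. f x * cnj (c x))"

end

theory Submission
  imports Defs
begin

definition nsm :: "nat \<Rightarrow> 'g::ab_group_add \<Rightarrow> 'g" where
  "nsm n x = ((+) x ^^ n) 0"

lemma nsm_0[simp]: "nsm 0 x = 0" by (simp add: nsm_def)
lemma nsm_Suc[simp]: "nsm (Suc n) x = x + nsm n x" by (simp add: nsm_def)
lemma nsm_add: "nsm (m + n) x = nsm m x + nsm n x"
  by (induction m) (auto simp: add.assoc)
lemma nsm_mult: "nsm (m * n) x = nsm m (nsm n x)"
  by (induction m) (auto simp: nsm_add)
lemma nsm_1[simp]: "nsm 1 x = x" by simp

lemma order_ex:
  fixes x :: "'g::{ab_group_add,finite}"
  shows "\<exists>n>0. nsm n x = 0"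
proof -
  have "\<not> inj_on (\<lambda>k. nsm k x) {..CARD('g)}"
  proof
    assume "inj_on (\<lambda>k. nsm k x) {..CARD('g)}"
    then have "card ((\<lambda>k. nsm k x) ` {..CARD('g)}) = Suc CARD('g)"
      by (simp add: card_image)
    moreover have "card ((\<lambda>k. nsm k x) ` {..CARD('g)}) \<le> CARD('g)"
      by (rule card_mono) auto
    ultimately show False by simp
  qed
  then obtain i j where ij: "i \<noteq> j" "nsm i x = nsm j x"
    unfolding inj_on_def by auto
  have "\<exists>i j. i < j \<and> nsm i x = nsm j x"
    using ij by (metis linorder_neqE_nat)
  then obtain i j where "i < j" "nsm i x = nsm j x" by blast
  then have "nsm (j - i) x + nsm i x = nsm i x"
    by (metis le_add_diff_inverse2 less_imp_le nsm_add)
  then show ?thesis using \<open>i < j\<close> by (intro exI[of _ "j - i"]) auto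
qed

definition subgrp :: "'g::ab_group_add set \<Rightarrow> bool" where
  "subgrp H \<longleftrightarrow> 0 \<in> H \<and> (\<forall>a\<in>H. \<forall>b\<in>H. a + b \<in> H)"

definition chr :: "'g::ab_group_add set \<Rightarrow> ('g \<Rightarrow> complex) \<Rightarrow> bool" where
  "chr H \<psi> \<longleftrightarrow> (\<forall>a\<in>H. \<forall>b\<in>H. \<psi> (a + b) = \<psi> a * \<psi> b) \<and> (\<forall>a\<in>H. cmod (\<psi> a) = 1)"

lemma subgrp_nsm: "subgrp H \<Longrightarrow> a \<in> H \<Longrightarrow> nsm n a \<in> H"
  by (induction n) (auto simp: subgrp_def)

lemma subgrp_uminus:
  fixes a :: "'g::{ab_group_add,finite}"
  assumes "subgrp H" "a \<in> H" shows "- a \<in> H"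
proof -
  obtain n where n: "n > 0" "nsm n a = 0" using order_ex by blast
  then have "nsm n a = a + nsm (n - 1) a"
    by (metis Suc_diff_1 nsm_Suc)
  then have "- a = nsm (n - 1) a" using n
    by (metis add_eq_0_iff)
  then show ?thesis using subgrp_nsm assms by metis
qed

lemma subgrp_diff:
  fixes a :: "'g::{ab_group_add,finite}"
  assumes "subgrp H" "a \<in> H" "b \<in> H" shows "a - b \<in> H"
  using subgrp_uminus[OF assms(1,3)] assms unfolding subgrp_def
  by (metis diff_conv_add_uminus)

lemma chr_0: "subgrp H \<Longrightarrow> chr H \<psi> \<Longrightarrow> \<psi> 0 = 1"
  unfolding subgrp_def chr_def
  by (metis add_0 mult_cancel_right1 norm_zero zero_neq_one)

lemma chr_nsm: "subgrp H \<Longrightarrow> chr H \<psi> \<Longrightarrow> a \<in> H \<Longrightarrow> \<psi> (nsm n a) = \<psi> a ^ n"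
proof (induction n)
  case 0 then show ?case using chr_0 by simp
next
  case (Suc n)
  then show ?case using subgrp_nsm[of H a n] by (simp add: chr_def)
qed


lemma ext_key:
  fixes g :: "'g::{ab_group_add,finite}"
  assumes H: "subgrp H" "chr H \<psi>" and m: "m > 0" "nsm m g \<in> H"
    and mmin: "\<And>r. 0 < r \<Longrightarrow> r < m \<Longrightarrow> nsm r g \<notin> H"
    and w: "w ^ m = \<psi> (nsm m g)"
    and hh: "h \<in> H" "h' \<in> H" and eq: "h + nsm k g = h' + nsm k' g" and kk: "k' \<le> k"
  shows "\<psi> h * w ^ k = \<psi> h' * w ^ k'"
proof -
  define d where "d = k - k'"
  have kd: "k = d + k'" using kk d_def by simp
  have "nsm d g = h' - h" using eq unfolding kd nsm_add by (simp add: algebra_simps)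
  then have dH: "nsm d g \<in> H" using subgrp_diff[OF H(1) hh(2,1)] by simp
  define q r where "q = d div m" "r = d mod m"
  have dqr: "d = r + q * m" using q_r_def by simp
  have "nsm r g = nsm d g - nsm q (nsm m g)" unfolding dqr nsm_add nsm_mult by simp
  then have "nsm r g \<in> H" using subgrp_diff[OF H(1) dH subgrp_nsm[OF H(1) m(2)]] by simp
  moreover have "r < m" using m q_r_def by simp
  ultimately have "r = 0" using mmin by blast
  have "nsm d g = nsm q (nsm m g)" using dqr \<open>r = 0\<close> nsm_mult[of q m g] by simp
  then have h': "h' = h + nsm q (nsm m g)"
    using \<open>nsm d g = h' - h\<close> by (simp add: algebra_simps)
  have "\<psi> h' = \<psi> h * \<psi> (nsm m g) ^ q"
    using H subgrp_nsm[OF H(1) m(2)] hh unfolding h' chr_def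
    by (simp add: chr_nsm[OF H m(2)])
  also have "\<dots> = \<psi> h * w ^ (m * q)" using w by (simp add: power_mult)
  finally show ?thesis using dqr \<open>r = 0\<close> kd by (simp add: power_add mult.commute mult.left_commute)
qed

lemma ext_step:
  fixes g :: "'g::{ab_group_add,finite}"
  assumes H: "subgrp H" "chr H \<psi>" and m: "m > 0" "nsm m g \<in> H"
    and mmin: "\<And>r. 0 < r \<Longrightarrow> r < m \<Longrightarrow> nsm r g \<notin> H"
    and w: "w ^ m = \<psi> (nsm m g)"
  defines "H' \<equiv> {h + nsm k g | h k. h \<in> H}"
  shows "subgrp H'" "H \<subseteq> H'" "g \<in> H'"
    "\<exists>\<psi>'. chr H' \<psi>' \<and> (\<forall>a\<in>H. \<psi>' a = \<psi> a) \<and> \<psi>' g = w"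
proof -
  show "subgrp H'" unfolding subgrp_def H'_def
  proof safe
    show "\<exists>h k. (0::'g) = h + nsm k g \<and> h \<in> H"
      using H(1) by (intro exI[of _ 0] exI[of _ 0]) (auto simp: subgrp_def)
    fix h k h' k' assume "h \<in> H" "h' \<in> H"
    then show "\<exists>h'' k''. h + nsm k g + (h' + nsm k' g) = h'' + nsm k'' g \<and> h'' \<in> H"
      using H(1) by (intro exI[of _ "h + h'"] exI[of _ "k + k'"])
        (auto simp: subgrp_def nsm_add algebra_simps)
  qed
  show "H \<subseteq> H'" unfolding H'_def
    by (auto intro!: exI[of _ "0::nat"])
  show "g \<in> H'" unfolding H'_def using H(1)
    by (auto simp: subgrp_def intro!: exI[of _ 0] exI[of _ 1])
  have cmw: "cmod w = 1"
  proof -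
    have "cmod w ^ m = cmod (\<psi> (nsm m g))" using w by (metis norm_power)
    then have "cmod w ^ m = 1" using H m by (simp add: chr_def)
    then show ?thesis using m power_eq_imp_eq_base[of "cmod w" m 1] by simp
  qed
  have wd: "\<psi> h * w ^ k = \<psi> h' * w ^ k'" if "h \<in> H" "h' \<in> H" "h + nsm k g = h' + nsm k' g"
    for h h' k k'
  proof (cases "k' \<le> k")
    case True then show ?thesis using ext_key[OF H m mmin w] that by blast
  next
    case False then show ?thesis using ext_key[OF H m mmin w, of h' h k' k] that by simp
  qed
  define \<psi>' where "\<psi>' y = (SOME z. \<exists>h k. h \<in> H \<and> y = h + nsm k g \<and> z = \<psi> h * w ^ k)" for y
  have val: "\<psi>' (h + nsm k g) = \<psi> h * w ^ k" if "h \<in> H" for h k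
  proof -
    have "\<exists>z. \<exists>h' k'. h' \<in> H \<and> h + nsm k g = h' + nsm k' g \<and> z = \<psi> h' * w ^ k'"
      using that by blast
    then have "\<exists>h' k'. h' \<in> H \<and> h + nsm k g = h' + nsm k' g \<and> \<psi>' (h + nsm k g) = \<psi> h' * w ^ k'"
      unfolding \<psi>'_def by (rule someI_ex)
    then show ?thesis using wd that by metis
  qed
  show "\<exists>\<psi>'. chr H' \<psi>' \<and> (\<forall>a\<in>H. \<psi>' a = \<psi> a) \<and> \<psi>' g = w"
  proof (intro exI[of _ \<psi>'] conjI ballI)
    show "chr H' \<psi>'" unfolding chr_def H'_def
    proof safe
      fix h k h' k' assume hh: "h \<in> H" "h' \<in> H"
      have e: "h + nsm k g + (h' + nsm k' g) = (h + h') + nsm (k + k') g"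
        by (simp add: nsm_add algebra_simps)
      have "\<psi>' (h + nsm k g + (h' + nsm k' g)) = \<psi> (h + h') * w ^ (k + k')"
        unfolding e using hh H by (intro val) (auto simp: subgrp_def)
      then show "\<psi>' (h + nsm k g + (h' + nsm k' g)) = \<psi>' (h + nsm k g) * \<psi>' (h' + nsm k' g)"
        using hh H by (simp add: val chr_def power_add mult_ac)
    next
      fix h k assume "h \<in> H"
      then show "cmod (\<psi>' (h + nsm k g)) = 1"
        using H cmw by (simp add: val chr_def norm_mult norm_power)
    qed
  next
    fix a assume "a \<in> H" then show "\<psi>' a = \<psi> a" using val[of a 0] by simp
  next
    show "\<psi>' g = w" using val[of 0 1] H chr_0[OF H] by (simp add: subgrp_def)
  qed
qed


lemma unit_root_ex:
  assumes "cmod z = 1" "m > 0"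
  shows "\<exists>w. w ^ m = z"
proof -
  have "z \<noteq> 0" using assms by auto
  have "cis (Arg z / m) ^ m = cis (Arg z)" using assms by (simp only: Complex.DeMoivre) simp
  also have "\<dots> = z" using cis_Arg[OF \<open>z \<noteq> 0\<close>] assms by (simp add: sgn_div_norm)
  finally show ?thesis by blast
qed

lemma full_ext:
  fixes H :: "'g::{ab_group_add,finite} set"
  assumes "subgrp H" "chr H \<psi>"
  shows "\<exists>\<xi>. chr UNIV \<xi> \<and> (\<forall>a\<in>H. \<xi> a = \<psi> a)"
  using assms
proof (induction "card (UNIV - H)" arbitrary: H \<psi> rule: less_induct)
  case less
  show ?case
  proof (cases "H = UNIV")
    case True then show ?thesis using less by auto
  next
    case False
    then obtain g where g: "g \<notin> H" by auto
    define P where "P m \<longleftrightarrow> m > 0 \<and> nsm m g \<in> H" for m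
    have "\<exists>m. P m" using order_ex[of g] less(2) unfolding P_def subgrp_def by auto
    define m where "m = (LEAST m. P m)"
    have Pm: "P m" unfolding m_def using \<open>\<exists>m. P m\<close> by (metis LeastI)
    have mmin: "nsm r g \<notin> H" if "0 < r" "r < m" for r
      using not_less_Least[of r P] that unfolding m_def P_def by blast
    have "cmod (\<psi> (nsm m g)) = 1" using Pm less(3) unfolding P_def chr_def by auto
    then obtain w where w: "w ^ m = \<psi> (nsm m g)" using unit_root_ex Pm P_def by blast
    note E = ext_step[OF less(2,3) Pm[unfolded P_def, THEN conjunct1]
        Pm[unfolded P_def, THEN conjunct2] mmin w]
    define H' where "H' = {h + nsm k g | h k. h \<in> H}"
    obtain \<psi>' where \<psi>': "chr H' \<psi>'" "\<forall>a\<in>H. \<psi>' a = \<psi> a"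
      using E(4) unfolding H'_def by blast
    have "card (UNIV - H') < card (UNIV - H)"
      using E(2,3) g unfolding H'_def[symmetric] by (intro psubset_card_mono) auto
    from less(1)[OF this E(1)[folded H'_def] \<psi>'(1)] obtain \<xi> where
      "chr UNIV \<xi>" "\<forall>a\<in>H'. \<xi> a = \<psi>' a" by blast
    then show ?thesis using \<psi>'(2) E(2)[folded H'_def] by (metis subsetD)
  qed
qed

lemma characters_chr: "characters = {\<xi>. chr UNIV \<xi>}"
  by (auto simp: characters_def chr_def)

lemma separation:
  fixes x :: "'g::{ab_group_add,finite}"
  assumes "x \<noteq> 0"
  shows "\<exists>\<xi>\<in>characters. \<xi> x \<noteq> 1"
proof -
  have H: "subgrp {0::'g}" "chr {0::'g} (\<lambda>_. 1)" by (auto simp: subgrp_def chr_def)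
  define P where "P m \<longleftrightarrow> m > 0 \<and> nsm m x \<in> {0}" for m
  have "\<exists>m. P m" using order_ex[of x] unfolding P_def by auto
  define m where "m = (LEAST m. P m)"
  have Pm: "P m" unfolding m_def using \<open>\<exists>m. P m\<close> by (metis LeastI)
  have mmin: "nsm r x \<notin> {0}" if "0 < r" "r < m" for r
    using not_less_Least[of r P] that unfolding m_def P_def by blast
  have "m \<noteq> 1" using Pm assms unfolding P_def by auto
  then have m2: "m \<ge> 2" using Pm unfolding P_def by auto
  define w where "w = cis (2 * pi / m)"
  have w: "w ^ m = (\<lambda>_. 1) (nsm m x)" unfolding w_def using m2 by (simp only: Complex.DeMoivre) simp
  have "cos (2 * pi / m) < cos 0"
  proof (rule cos_monotone_0_pi)
    show "0 < 2 * pi / m" using m2 by simp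
    have "2 * pi / m \<le> 2 * pi / 2" using m2 by (intro divide_left_mono) auto
    then show "2 * pi / m \<le> pi" by simp
  qed simp
  then have w1: "w \<noteq> 1" unfolding w_def by (auto simp: complex_eq_iff)
  note E = ext_step[OF H Pm[unfolded P_def, THEN conjunct1]
        Pm[unfolded P_def, THEN conjunct2] mmin w]
  obtain \<psi>' where "chr {h + nsm k x | h k. h \<in> {0}} \<psi>'" "\<psi>' x = w" using E(4) by blast
  from full_ext[OF E(1) this(1)] obtain \<xi> where "chr UNIV \<xi>" "\<xi> x = w"
    using E(3) \<open>\<psi>' x = w\<close> by blast
  then show ?thesis using w1 by (auto simp: characters_chr)
qed

lemma finite_characters: "finite (characters :: ('g::{ab_group_add,finite} \<Rightarrow> complex) set)"
proof -
  define ordr where "ordr x = (SOME n. n > 0 \<and> nsm n x = 0)" for x :: 'g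
  have ordr: "ordr x > 0 \<and> nsm (ordr x) x = 0" for x
    unfolding ordr_def using order_ex[of x] by (rule someI_ex)
  have "characters \<subseteq> (\<Pi>\<^sub>E x\<in>UNIV. {z. z ^ ordr x = 1})"
  proof
    fix \<xi> :: "'g \<Rightarrow> complex" assume "\<xi> \<in> characters"
    then have c: "chr UNIV \<xi>" by (simp add: characters_chr)
    have "\<xi> x ^ ordr x = 1" for x
      using chr_nsm[OF _ c, of x "ordr x"] chr_0[OF _ c] ordr[of x] by (simp add: subgrp_def)
    then show "\<xi> \<in> (\<Pi>\<^sub>E x\<in>UNIV. {z. z ^ ordr x = 1})" by auto
  qed
  moreover have "finite (\<Pi>\<^sub>E x\<in>UNIV. {z::complex. z ^ ordr x = 1})"
    using ordr by (intro finite_PiE finite_roots_unity) (auto simp: Suc_le_eq)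
  ultimately show ?thesis by (rule finite_subset)
qed


lemma char_props:
  fixes \<xi> :: "'g::{ab_group_add,finite} \<Rightarrow> complex"
  assumes "\<xi> \<in> characters"
  shows "\<xi> (a + b) = \<xi> a * \<xi> b" "cmod (\<xi> a) = 1" "\<xi> 0 = 1"
    "cnj (\<xi> a) * \<xi> a = 1" "\<xi> (a - b) = \<xi> a * cnj (\<xi> b)"
proof -
  have c: "chr UNIV \<xi>" using assms by (simp add: characters_chr)
  show m: "\<xi> (a + b) = \<xi> a * \<xi> b" "cmod (\<xi> a) = 1" using c by (auto simp: chr_def)
  show z: "\<xi> 0 = 1" using chr_0[OF _ c] by (simp add: subgrp_def)
  have cc: "cnj (\<xi> x) * \<xi> x = 1" for x
  proof -
    have "cnj (\<xi> x) * \<xi> x = of_real (cmod (\<xi> x) ^ 2)" by (metis complex_norm_square mult.commute)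
    then show ?thesis using c by (simp add: chr_def)
  qed
  then show "cnj (\<xi> a) * \<xi> a = 1" .
  have "\<xi> (a - b) * \<xi> b = \<xi> a" using c unfolding chr_def by (metis diff_add_cancel iso_tuple_UNIV_I)
  then have "\<xi> (a - b) * \<xi> b * cnj (\<xi> b) = \<xi> a * cnj (\<xi> b)" by simp
  then show "\<xi> (a - b) = \<xi> a * cnj (\<xi> b)" by (metis cc mult.assoc mult.commute mult_1_right)
qed

lemma one_char: "(\<lambda>_. 1) \<in> characters"
  by (simp add: characters_def)

lemma char_sum_x:
  fixes \<xi> :: "'g::{ab_group_add,finite} \<Rightarrow> complex"
  assumes "\<xi> \<in> characters"
  shows "(\<Sum>x\<in>UNIV. \<xi> x) = (if \<xi> = (\<lambda>_. 1) then of_nat CARD('g) else 0)"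
proof (cases "\<xi> = (\<lambda>_. 1)")
  case True then show ?thesis by simp
next
  case False
  then obtain a where a: "\<xi> a \<noteq> 1" by auto
  have "(\<Sum>x\<in>UNIV. \<xi> x) = (\<Sum>x\<in>UNIV. \<xi> (a + x))"
    by (rule sum.reindex_bij_witness[of _ "\<lambda>x. a + x" "\<lambda>x. x - a"]) auto
  also have "\<dots> = \<xi> a * (\<Sum>x\<in>UNIV. \<xi> x)"
    using char_props[OF assms] by (simp add: sum_distrib_left)
  finally have "(1 - \<xi> a) * (\<Sum>x\<in>UNIV. \<xi> x) = 0" by (simp add: algebra_simps)
  then show ?thesis using a False by simp
qed

lemma char_sum_chi:
  fixes x :: "'g::{ab_group_add,finite}"
  shows "(\<Sum>\<xi>\<in>characters. \<xi> x) = (if x = 0 then of_nat (card (characters :: ('g \<Rightarrow> complex) set)) else 0)"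
proof (cases "x = 0")
  case True then show ?thesis by (simp add: char_props)
next
  case False
  then obtain \<xi>0 where \<xi>0: "\<xi>0 \<in> characters" "\<xi>0 x \<noteq> 1" using separation by blast
  have mulc: "(\<lambda>y. \<xi>1 y * \<xi>2 y) \<in> characters" if "\<xi>1 \<in> characters" "\<xi>2 \<in> characters" for \<xi>1 \<xi>2
    using char_props[OF that(1)] char_props[OF that(2)]
    by (auto simp: characters_def norm_mult mult_ac)
  have cnjc: "(\<lambda>y. cnj (\<xi>1 y)) \<in> characters" if "\<xi>1 \<in> characters" for \<xi>1
    using char_props[OF that] by (auto simp: characters_def)
  have "(\<Sum>\<xi>\<in>characters. \<xi> x) = (\<Sum>\<xi>\<in>characters. \<xi>0 x * \<xi> x)"
    using mulc[OF \<xi>0(1)] mulc[OF cnjc[OF \<xi>0(1)]] char_props(4)[OF \<xi>0(1)]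
    by (intro sum.reindex_bij_witness[of _ "\<lambda>\<xi> y. \<xi>0 y * \<xi> y" "\<lambda>\<xi> y. cnj (\<xi>0 y) * \<xi> y"])
      (auto simp: mult.assoc[symmetric] mult.commute[of "\<xi>0 _"])
  also have "\<dots> = \<xi>0 x * (\<Sum>\<xi>\<in>characters. \<xi> x)" by (simp add: sum_distrib_left)
  finally have "(1 - \<xi>0 x) * (\<Sum>\<xi>\<in>characters. \<xi> x) = 0" by (simp add: algebra_simps)
  then show ?thesis using \<xi>0 False by simp
qed

lemma card_characters: "card (characters :: ('g::{ab_group_add,finite} \<Rightarrow> complex) set) = CARD('g)"
proof -
  let ?C = "characters :: ('g \<Rightarrow> complex) set"
  have "(\<Sum>\<xi>\<in>?C. \<Sum>x\<in>UNIV. \<xi> x) = (\<Sum>\<xi>\<in>?C. if \<xi> = (\<lambda>_. 1) then of_nat CARD('g) else 0)"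
    by (intro sum.cong refl char_sum_x)
  also have "\<dots> = of_nat CARD('g)"
    by (subst sum.delta[OF finite_characters]) (simp add: one_char)
  finally have 1: "(\<Sum>\<xi>\<in>?C. \<Sum>x\<in>UNIV. \<xi> x) = (of_nat CARD('g) :: complex)" .
  have "(\<Sum>\<xi>\<in>?C. \<Sum>x\<in>UNIV. \<xi> x) = (\<Sum>x\<in>UNIV. \<Sum>\<xi>\<in>?C. \<xi> x)" by (rule sum.swap)
  also have "\<dots> = of_nat (card ?C)" by (simp add: char_sum_chi)
  finally show ?thesis using 1 by (metis of_nat_eq_iff)
qed

lemma char_sum_chi':
  fixes x :: "'g::{ab_group_add,finite}"
  shows "(\<Sum>\<xi>\<in>characters. \<xi> x) = (if x = 0 then of_nat CARD('g) else 0)"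
  using char_sum_chi[of x] by (simp add: card_characters)

lemma plancherel:
  fixes f :: "'g::{ab_group_add,finite} \<Rightarrow> complex"
  shows "(\<Sum>\<xi>\<in>characters. cmod (fourier f \<xi>) ^ 2) = (\<Sum>x\<in>UNIV. cmod (f x) ^ 2)"
proof -
  define c :: complex where "c = of_real (1 / sqrt (real CARD('g)))"
  have cc: "c * c * of_nat CARD('g) = 1"
  proof -
    have n0: "real CARD('g) > 0" by simp
    have "(1 / sqrt (real CARD('g))) * (1 / sqrt (real CARD('g))) * real CARD('g) = 1"
      using n0 by (simp add: power2_eq_square[symmetric] power_divide)
    then have "of_real ((1 / sqrt (real CARD('g))) * (1 / sqrt (real CARD('g))) * real CARD('g)) = (1::complex)"
      by simp
    then show ?thesis by (simp only: of_real_mult of_real_of_nat_eq c_def)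
  qed
  have F: "fourier f \<xi> = c * (\<Sum>x\<in>UNIV. f x * cnj (\<xi> x))" for \<xi>
    by (simp add: fourier_def c_def)
  have "of_real (\<Sum>\<xi>\<in>characters. cmod (fourier f \<xi>) ^ 2)
      = (\<Sum>\<xi>\<in>characters. fourier f \<xi> * cnj (fourier f \<xi>))"
    by (simp only: of_real_sum complex_norm_square)
  also have "\<dots> = (\<Sum>\<xi>\<in>characters. c * c * (\<Sum>x\<in>UNIV. \<Sum>y\<in>UNIV. f x * cnj (f y) * \<xi> (y - x)))"
  proof (rule sum.cong[OF refl])
    fix \<xi> :: "'g \<Rightarrow> complex" assume \<xi>: "\<xi> \<in> characters"
    have "fourier f \<xi> * cnj (fourier f \<xi>)
       = c * c * ((\<Sum>x\<in>UNIV. f x * cnj (\<xi> x)) * (\<Sum>y\<in>UNIV. cnj (f y) * \<xi> y))"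
      unfolding F by (simp add: c_def cnj_sum mult_ac)
    also have "\<dots> = c * c * (\<Sum>x\<in>UNIV. \<Sum>y\<in>UNIV. (f x * cnj (\<xi> x)) * (cnj (f y) * \<xi> y))"
      by (simp only: sum_product)
    also have "\<dots> = c * c * (\<Sum>x\<in>UNIV. \<Sum>y\<in>UNIV. f x * cnj (f y) * \<xi> (y - x))"
      by (simp add: char_props(5)[OF \<xi>] mult_ac)
    finally show "fourier f \<xi> * cnj (fourier f \<xi>) = c * c * (\<Sum>x\<in>UNIV. \<Sum>y\<in>UNIV. f x * cnj (f y) * \<xi> (y - x))" .
  qed
  also have "\<dots> = c * c * (\<Sum>\<xi>\<in>characters. \<Sum>x\<in>UNIV. \<Sum>y\<in>UNIV. f x * cnj (f y) * \<xi> (y - x))"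
    by (simp only: sum_distrib_left)
  also have "\<dots> = c * c * (\<Sum>x\<in>UNIV. \<Sum>\<xi>\<in>characters. \<Sum>y\<in>UNIV. f x * cnj (f y) * \<xi> (y - x))"
    by (subst sum.swap) (rule refl)
  also have "\<dots> = c * c * (\<Sum>x\<in>UNIV. \<Sum>y\<in>UNIV. \<Sum>\<xi>\<in>characters. f x * cnj (f y) * \<xi> (y - x))"
    by (rule arg_cong[where f="\<lambda>z. c * c * z"], rule sum.cong[OF refl], rule sum.swap)
  also have "\<dots> = c * c * (\<Sum>x\<in>UNIV. \<Sum>y\<in>UNIV. f x * cnj (f y) * (\<Sum>\<xi>\<in>characters. \<xi> (y - x)))"
    by (simp only: sum_distrib_left)
  also have "\<dots> = c * c * (\<Sum>x\<in>UNIV. f x * cnj (f x) * of_nat CARD('g))"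
    by (simp add: char_sum_chi' if_distrib cong: if_cong)
  also have "\<dots> = (\<Sum>x\<in>UNIV. f x * cnj (f x))"
    using cc by (simp add: sum_distrib_left sum_distrib_right mult_ac)
  also have "\<dots> = of_real (\<Sum>x\<in>UNIV. cmod (f x) ^ 2)"
    by (simp only: of_real_sum complex_norm_square)
  finally show ?thesis by (metis of_real_eq_iff)
qed

lemma inversion:
  fixes f :: "'g::{ab_group_add,finite} \<Rightarrow> complex"
  shows "f x = of_real (1 / sqrt (real CARD('g))) * (\<Sum>\<xi>\<in>characters. fourier f \<xi> * \<xi> x)"
proof -
  define c :: complex where "c = of_real (1 / sqrt (real CARD('g)))"
  have cc: "c * c * of_nat CARD('g) = 1"
  proof -
    have n0: "real CARD('g) > 0" by simp
    have "(1 / sqrt (real CARD('g))) * (1 / sqrt (real CARD('g))) * real CARD('g) = 1"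
      using n0 by (simp add: power2_eq_square[symmetric] power_divide)
    then have "of_real ((1 / sqrt (real CARD('g))) * (1 / sqrt (real CARD('g))) * real CARD('g)) = (1::complex)"
      by simp
    then show ?thesis by (simp only: of_real_mult of_real_of_nat_eq c_def)
  qed
  have F: "fourier f \<xi> = c * (\<Sum>y\<in>UNIV. f y * cnj (\<xi> y))" for \<xi>
    by (simp add: fourier_def c_def)
  have "c * (\<Sum>\<xi>\<in>characters. fourier f \<xi> * \<xi> x)
      = c * c * (\<Sum>\<xi>\<in>characters. \<Sum>y\<in>UNIV. f y * \<xi> (x - y))"
    unfolding F
    by (simp add: sum_distrib_left sum_distrib_right char_props(5) mult_ac)
  also have "\<dots> = c * c * (\<Sum>y\<in>UNIV. f y * (\<Sum>\<xi>\<in>characters. \<xi> (x - y)))"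
    by (subst sum.swap) (simp only: sum_distrib_left)
  also have "\<dots> = c * c * (f x * of_nat CARD('g))"
    by (simp add: char_sum_chi' if_distrib cong: if_cong)
  also have "\<dots> = f x" using cc by (simp add: mult_ac)
  finally show ?thesis unfolding c_def by simp
qed

lemma bernoulli_powr:
  fixes u t :: real
  assumes "t \<ge> 1" "u \<ge> 0"
  shows "1 + t * (u - 1) \<le> u powr t"
proof (cases "u = 0")
  case True then show ?thesis using assms by simp
next
  case False
  then have u: "u > 0" using assms by simp
  have "t * (u - 1) \<le> u powr t - 1 powr t"
    using u assms
    by (intro convex_on_imp_above_tangent[where A = "{0<..}", OF powr_convex[OF assms(1)]])
       (auto intro!: derivative_eq_intros simp: interior_open)
  then show ?thesis by simp
qed

lemma power_mean:
  fixes a :: "'a \<Rightarrow> real"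
  assumes A: "finite A" and a: "\<And>i. i \<in> A \<Longrightarrow> a i \<ge> 0" and r: "0 < r" "r \<le> s"
  shows "(\<Sum>i\<in>A. a i powr r) powr (1 / r) \<le> real (card A) powr (1 / r - 1 / s) * (\<Sum>i\<in>A. a i powr s) powr (1 / s)"
proof -
  define R where "R = (\<Sum>i\<in>A. a i powr r)"
  define Sg where "Sg = (\<Sum>i\<in>A. a i powr s)"
  define N where "N = real (card A)"
  have R0: "R \<ge> 0" "Sg \<ge> 0" unfolding R_def Sg_def by (auto intro: sum_nonneg)
  show ?thesis
  proof (cases "R = 0")
    case True then show ?thesis using R0 unfolding R_def[symmetric] Sg_def[symmetric] by simp
  next
    case False
    then have "A \<noteq> {}" unfolding R_def by auto
    then have N: "N > 0" unfolding N_def using A by (simp add: card_gt_0_iff)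
    define m where "m = R / N"
    have m: "m > 0" using R0 False N unfolding m_def by simp
    define t where "t = s / r"
    have t: "t \<ge> 1" using r unfolding t_def by simp
    define u where "u i = a i powr r / m" for i
    have u0: "u i \<ge> 0" for i unfolding u_def using m by simp
    have su: "(\<Sum>i\<in>A. u i) = N" unfolding u_def
      using N False m by (simp add: sum_divide_distrib[symmetric] R_def[symmetric] m_def sum_distrib_right[symmetric])
    have "(\<Sum>i\<in>A. 1 + t * (u i - 1)) \<le> (\<Sum>i\<in>A. u i powr t)"
      by (intro sum_mono bernoulli_powr t u0)
    moreover have "(\<Sum>i\<in>A. 1 + t * (u i - 1)) = N"
      using su by (simp add: sum.distrib sum_subtractf sum_distrib_left[symmetric] N_def right_diff_distrib)
    moreover have "u i powr t = a i powr s / m powr t" if "i \<in> A" for i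
      using a[OF that] m r unfolding u_def t_def
      by (simp add: powr_divide powr_powr)
    ultimately have "N \<le> (\<Sum>i\<in>A. a i powr s / m powr t)" by (metis (no_types, lifting) sum.cong)
    then have "N * m powr t \<le> Sg" unfolding Sg_def using m
      by (simp add: sum_divide_distrib[symmetric] pos_le_divide_eq)
    then have "(N * m powr t) powr (1 / s) \<le> Sg powr (1 / s)"
      using N m r by (intro powr_mono2) auto
    moreover have "(N * m powr t) powr (1 / s) = N powr (1 / s) * m powr (1 / r)"
      using N m r unfolding t_def by (simp add: powr_mult powr_powr)
    moreover have "m powr (1 / r) = R powr (1 / r) / N powr (1 / r)"
      unfolding m_def using N R0 by (simp add: powr_divide)
    ultimately have "N powr (1 / s) * (R powr (1 / r) / N powr (1 / r)) \<le> Sg powr (1 / s)" by simp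
    then have "R powr (1 / r) \<le> N powr (1 / r) / N powr (1 / s) * Sg powr (1 / s)"
      using N by (simp add: field_simps)
    then show ?thesis unfolding R_def[symmetric] Sg_def[symmetric] N_def[symmetric]
      using N by (simp add: powr_diff)
  qed
qed

lemma le_powr_small:
  fixes x r :: real
  assumes "0 \<le> x" "x \<le> 1" "r \<le> 1"
  shows "x \<le> x powr r"
  using powr_mono'[OF assms(3) assms(1,2)] assms(1) by simp

lemma subadd_powr:
  fixes a b r :: real
  assumes "a \<ge> 0" "b \<ge> 0" "0 < r" "r \<le> 1"
  shows "(a + b) powr r \<le> a powr r + b powr r"
proof (cases "a + b = 0")
  case True then show ?thesis using assms by simp
next
  case False
  then have ab: "a + b > 0" using assms by simp
  have 1: "a / (a + b) \<le> (a / (a + b)) powr r"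
    using assms ab by (intro le_powr_small) auto
  have 2: "b / (a + b) \<le> (b / (a + b)) powr r"
    using assms ab by (intro le_powr_small) auto
  have "1 = a / (a + b) + b / (a + b)" using ab by (simp add: add_divide_distrib[symmetric])
  also have "\<dots> \<le> (a powr r + b powr r) / (a + b) powr r"
    using 1 2 assms ab by (simp add: powr_divide add_divide_distrib)
  finally show ?thesis using ab by (simp add: pos_le_divide_eq)
qed


theorem theorem3p1:
  fixes S :: "'g::{ab_group_add,finite} set"
    and Sigma :: "('g \<Rightarrow> complex) set"
    and p q rho :: real
  assumes "1 \<le> p" and "p \<le> 2" and "1 \<le> q" and "q \<le> 2"
    and "Sigma \<subseteq> characters"
    and restr: "\<forall>f :: 'g \<Rightarrow> complex.
        (\<Sum>c\<in>Sigma. cmod (fourier f c) powr q) powr (1 / q)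
          \<le> rho * (\<Sum>x\<in>UNIV. cmod (f x) powr p) powr (1 / p)"
    and small: "rho * real (card S) powr (1 / p) < real CARD('g) powr (1 / q - 1 / 2)"
  shows "\<forall>f :: 'g \<Rightarrow> complex.
     sqrt (\<Sum>x\<in>UNIV. cmod (f x) ^ 2)
       \<le> (1 + real (card S) powr (1 / 2) * real (card (characters - Sigma)) powr (1 / q - 1 / 2)
               / (real CARD('g) powr (1 / q - 1 / 2) - rho * real (card S) powr (1 / p)))
         * (sqrt (\<Sum>x\<in>UNIV - S. cmod (f x) ^ 2)
            + sqrt (\<Sum>c\<in>characters - Sigma. cmod (fourier f c) ^ 2))"
proof
  fix f :: "'g \<Rightarrow> complex"
  let ?C = "characters :: ('g \<Rightarrow> complex) set"
  define n where "n = real CARD('g)"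
  define NS where "NS = real (card S)"
  define Sc where "Sc = ?C - Sigma"
  define D where "D = n powr (1 / q - 1 / 2) - rho * NS powr (1 / p)"
  define K where "K = NS powr (1 / 2) * real (card Sc) powr (1 / q - 1 / 2) / D"
  define a where "a = sqrt (\<Sum>x\<in>UNIV - S. cmod (f x) ^ 2)"
  define b where "b = sqrt (\<Sum>c\<in>Sc. cmod (fourier f c) ^ 2)"
  define g where "g x = (if x \<in> S then f x else 0)" for x
  define h where "h x = (if x \<in> S then 0 else f x)" for x
  have n0: "n > 0" unfolding n_def by simp
  have D0: "D > 0" using small unfolding D_def n_def NS_def by simp
  have q0: "q > 0" "p > 0" using assms by auto
  have finC: "finite ?C" by (rule finite_characters)
  have cardC: "card ?C = CARD('g)" by (rule card_characters)
  have a0: "a \<ge> 0" "b \<ge> 0" unfolding a_def b_def by (auto intro!: sum_nonneg)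
  have K0: "K \<ge> 0" unfolding K_def using D0 by simp
  have rho0: "rho \<ge> 0"
  proof -
    have "0 \<le> (\<Sum>c\<in>Sigma. cmod (fourier (\<lambda>_::'g. 1 :: complex) c) powr q) powr (1 / q)" by simp
    also have "\<dots> \<le> rho * (\<Sum>x\<in>UNIV. cmod ((\<lambda>_::'g. 1 :: complex) x) powr p) powr (1 / p)"
      using restr[rule_format, of "\<lambda>_. 1"] by simp
    also have "\<dots> = rho * n powr (1 / p)" unfolding n_def by simp
    finally show ?thesis using n0 by (simp add: zero_le_mult_iff)
  qed
  define M where "M = Max (range (\<lambda>x. cmod (g x)))"
  have gM: "cmod (g x) \<le> M" for x unfolding M_def by (rule Max_ge) auto
  have "M \<in> range (\<lambda>x. cmod (g x))"
    unfolding M_def by (rule Max_in) auto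
  then obtain x0 where x0: "M = cmod (g x0)" by auto
  have M0: "M \<ge> 0" using x0 by simp
  define Aq where "Aq = (\<Sum>c\<in>?C. cmod (fourier g c) powr q) powr (1 / q)"
  define AS where "AS = (\<Sum>c\<in>Sigma. cmod (fourier g c) powr q) powr (1 / q)"
  define Ac where "Ac = (\<Sum>c\<in>Sc. cmod (fourier g c) powr q) powr (1 / q)"
  define B2 where "B2 = sqrt (\<Sum>c\<in>Sc. cmod (fourier g c) ^ 2)"
  have stepB: "n powr (1 / q - 1 / 2) * M \<le> Aq"
  proof -
    have "M = cmod (of_real (1 / sqrt n) * (\<Sum>\<xi>\<in>?C. fourier g \<xi> * \<xi> x0))"
      using x0 inversion[of g x0] unfolding n_def by simp
    also have "\<dots> \<le> (1 / sqrt n) * (\<Sum>\<xi>\<in>?C. cmod (fourier g \<xi>))"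
    proof -
      have "cmod (\<Sum>\<xi>\<in>?C. fourier g \<xi> * \<xi> x0) \<le> (\<Sum>\<xi>\<in>?C. cmod (fourier g \<xi> * \<xi> x0))"
        by (rule norm_sum)
      also have "\<dots> = (\<Sum>\<xi>\<in>?C. cmod (fourier g \<xi>))"
        by (intro sum.cong refl) (simp add: norm_mult char_props(2))
      finally show ?thesis using n0 by (simp add: norm_divide divide_right_mono)
    qed
    also have "(\<Sum>\<xi>\<in>?C. cmod (fourier g \<xi>)) \<le> n powr (1 - 1 / q) * Aq"
    proof -
      have "(\<Sum>\<xi>\<in>?C. cmod (fourier g \<xi>) powr 1) powr (1 / 1) \<le> real (card ?C) powr (1 / 1 - 1 / q) * Aq"
        unfolding Aq_def using assms(3) by (intro power_mean finC) auto
      then show ?thesis using cardC unfolding n_def by simp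
    qed
    then have "(1 / sqrt n) * (\<Sum>\<xi>\<in>?C. cmod (fourier g \<xi>)) \<le> (1 / sqrt n) * (n powr (1 - 1 / q) * Aq)"
      using n0 by (intro mult_left_mono) auto
    also have "\<dots> = n powr (1 / 2 - 1 / q) * Aq"
    proof -
      have "n powr (1 - 1 / q) = n powr (1 / 2 + (1 / 2 - 1 / q))" by simp
      also have "\<dots> = sqrt n * n powr (1 / 2 - 1 / q)"
        using n0 by (simp only: powr_add powr_half_sqrt less_imp_le)
      finally show ?thesis using n0 by simp
    qed
    finally have "M \<le> n powr (1 / 2 - 1 / q) * Aq" .
    then have "n powr (1 / q - 1 / 2) * M \<le> n powr (1 / q - 1 / 2) * (n powr (1 / 2 - 1 / q) * Aq)"
      by (intro mult_left_mono) auto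
    also have "\<dots> = Aq" using n0 by (simp add: powr_add[symmetric] mult.assoc[symmetric])
    finally show ?thesis .
  qed
  have stepC: "Aq \<le> AS + Ac"
  proof -
    have "(\<Sum>c\<in>?C. cmod (fourier g c) powr q) = (\<Sum>c\<in>Sigma. cmod (fourier g c) powr q) + (\<Sum>c\<in>Sc. cmod (fourier g c) powr q)"
      unfolding Sc_def using assms(5) finC by (metis sum.subset_diff add.commute)
    then show ?thesis unfolding Aq_def AS_def Ac_def using assms(3)
      by (simp add: subadd_powr sum_nonneg)
  qed
  have stepD: "AS \<le> rho * NS powr (1 / p) * M"
  proof -
    have AS1: "AS \<le> rho * (\<Sum>x\<in>UNIV. cmod (g x) powr p) powr (1 / p)"
      unfolding AS_def using restr[rule_format, of g] by simp
    have "(\<Sum>x\<in>UNIV. cmod (g x) powr p) \<le> (\<Sum>x\<in>UNIV. if x \<in> S then M powr p else 0)"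
    proof (intro sum_mono)
      fix x show "cmod (g x) powr p \<le> (if x \<in> S then M powr p else 0)"
        using gM[of x] q0 by (cases "x \<in> S") (auto simp: g_def intro!: powr_mono2)
    qed
    also have "\<dots> = NS * M powr p" unfolding NS_def by (simp add: sum.If_cases)
    finally have "(\<Sum>x\<in>UNIV. cmod (g x) powr p) powr (1 / p) \<le> (NS * M powr p) powr (1 / p)"
      using q0 by (intro powr_mono2) (auto intro: sum_nonneg)
    then have "AS \<le> rho * (NS * M powr p) powr (1 / p)"
      using AS1 rho0 by (meson mult_left_mono order_trans)
    also have "(NS * M powr p) powr (1 / p) = NS powr (1 / p) * M"
      using q0 M0 unfolding NS_def by (simp add: powr_mult powr_powr)
    finally show ?thesis by (simp add: mult.assoc)
  qed
  have stepE: "Ac \<le> real (card Sc) powr (1 / q - 1 / 2) * B2"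
  proof -
    have "Ac \<le> real (card Sc) powr (1 / q - 1 / 2) * (\<Sum>c\<in>Sc. cmod (fourier g c) powr 2) powr (1 / 2)"
      unfolding Ac_def Sc_def using assms(3,4) finC by (intro power_mean) auto
    also have "(\<Sum>c\<in>Sc. cmod (fourier g c) powr 2) powr (1 / 2) = B2"
      unfolding B2_def by (simp add: powr_half_sqrt sum_nonneg)
    finally show ?thesis .
  qed
  have stepF: "M \<le> real (card Sc) powr (1 / q - 1 / 2) * B2 / D"
  proof -
    have "n powr (1 / q - 1 / 2) * M \<le> rho * NS powr (1 / p) * M + real (card Sc) powr (1 / q - 1 / 2) * B2"
      using stepB stepC stepD stepE by linarith
    then have "D * M \<le> real (card Sc) powr (1 / q - 1 / 2) * B2"
      unfolding D_def by (simp add: algebra_simps)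
    then show ?thesis using D0 by (simp add: pos_le_divide_eq mult.commute)
  qed
  have stepG: "sqrt (\<Sum>x\<in>UNIV. cmod (g x) ^ 2) \<le> NS powr (1 / 2) * M"
  proof -
    have "(\<Sum>x\<in>UNIV. cmod (g x) ^ 2) \<le> (\<Sum>x\<in>UNIV. if x \<in> S then M ^ 2 else 0)"
    proof (intro sum_mono)
      fix x show "cmod (g x) ^ 2 \<le> (if x \<in> S then M ^ 2 else 0)"
        using gM[of x] by (cases "x \<in> S") (auto simp: g_def intro!: power_mono)
    qed
    also have "\<dots> = NS * M ^ 2" unfolding NS_def by (simp add: sum.If_cases)
    finally have "sqrt (\<Sum>x\<in>UNIV. cmod (g x) ^ 2) \<le> sqrt (NS * M ^ 2)" by simp
    also have "\<dots> = NS powr (1 / 2) * M" using M0 unfolding NS_def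
      by (simp add: real_sqrt_mult powr_half_sqrt)
    finally show ?thesis .
  qed
  have hnorm: "(\<Sum>x\<in>UNIV. cmod (h x) ^ 2) = (\<Sum>x\<in>UNIV - S. cmod (f x) ^ 2)"
  proof -
    have "(\<Sum>x\<in>UNIV. cmod (h x) ^ 2) = (\<Sum>x\<in>UNIV. if x \<in> S then 0 else cmod (f x) ^ 2)"
      by (intro sum.cong) (auto simp: h_def)
    also have "\<dots> = (\<Sum>x\<in>UNIV - S. cmod (f x) ^ 2)"
      by (simp add: sum.If_cases Compl_eq_Diff_UNIV)
    finally show ?thesis .
  qed
  have stepH: "B2 \<le> b + a"
  proof -
    have Fg: "fourier g c = fourier f c - fourier h c" for c
    proof -
      have "g x * cnj (c x) = f x * cnj (c x) - h x * cnj (c x)" for x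
        unfolding g_def h_def by simp
      then show ?thesis unfolding fourier_def
        by (simp add: sum_subtractf right_diff_distrib)
    qed
    have "B2 = L2_set (\<lambda>c. cmod (fourier g c)) Sc" unfolding B2_def L2_set_def by simp
    also have "\<dots> \<le> L2_set (\<lambda>c. cmod (fourier f c) + cmod (fourier h c)) Sc"
      by (intro L2_set_mono) (auto simp: Fg norm_triangle_ineq4)
    also have "\<dots> \<le> L2_set (\<lambda>c. cmod (fourier f c)) Sc + L2_set (\<lambda>c. cmod (fourier h c)) Sc"
      by (rule L2_set_triangle_ineq)
    also have "L2_set (\<lambda>c. cmod (fourier f c)) Sc = b" unfolding b_def L2_set_def by simp
    also have "L2_set (\<lambda>c. cmod (fourier h c)) Sc \<le> L2_set (\<lambda>c. cmod (fourier h c)) ?C"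
      unfolding L2_set_def Sc_def using finC by (intro real_sqrt_le_mono sum_mono2) auto
    also have "\<dots> = a" unfolding L2_set_def a_def plancherel hnorm ..
    finally show ?thesis by simp
  qed
  have "(\<Sum>x\<in>UNIV. cmod (f x) ^ 2) = (\<Sum>x\<in>UNIV. cmod (h x) ^ 2) + (\<Sum>x\<in>UNIV. cmod (g x) ^ 2)"
    unfolding sum.distrib[symmetric] by (intro sum.cong) (auto simp: g_def h_def)
  then have "sqrt (\<Sum>x\<in>UNIV. cmod (f x) ^ 2) \<le> a + sqrt (\<Sum>x\<in>UNIV. cmod (g x) ^ 2)"
    using sqrt_add_le_add_sqrt[of "\<Sum>x\<in>UNIV. cmod (h x) ^ 2" "\<Sum>x\<in>UNIV. cmod (g x) ^ 2"]
    unfolding a_def hnorm[symmetric] by (simp add: sum_nonneg)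
  also have "sqrt (\<Sum>x\<in>UNIV. cmod (g x) ^ 2) \<le> K * (a + b)"
  proof -
    have "sqrt (\<Sum>x\<in>UNIV. cmod (g x) ^ 2) \<le> NS powr (1 / 2) * M" by (rule stepG)
    also have "\<dots> \<le> NS powr (1 / 2) * (real (card Sc) powr (1 / q - 1 / 2) * B2 / D)"
      using stepF by (intro mult_left_mono) auto
    also have "\<dots> = K * B2" unfolding K_def by simp
    also have "\<dots> \<le> K * (a + b)" using stepH K0 by (intro mult_left_mono) auto
    finally show ?thesis .
  qed
  also have "a + K * (a + b) \<le> (1 + K) * (a + b)" using a0 by (simp add: algebra_simps)
  finally show "sqrt (\<Sum>x\<in>UNIV. cmod (f x) ^ 2)
       \<le> (1 + real (card S) powr (1 / 2) * real (card (characters - Sigma)) powr (1 / q - 1 / 2)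
               / (real CARD('g) powr (1 / q - 1 / 2) - rho * real (card S) powr (1 / p)))
         * (sqrt (\<Sum>x\<in>UNIV - S. cmod (f x) ^ 2)
            + sqrt (\<Sum>c\<in>characters - Sigma. cmod (fourier f c) ^ 2))"
    unfolding K_def D_def NS_def n_def Sc_def a_def b_def by simp
qed

end
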